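(* Let $R \subseteq X \times Y \times Z$ be any relation with $X, Y$ finite. For every $\epsilon>0$ and $\delta>0$, \[ \mathsf{R}\mathsf{Q}_{\epsilon+\delta}^{||}(R) \leq \mathsf{R}\mathsf{Q}_\epsilon^{||,pub}(R) + O\!\left(\log (\log |X| + \log |Y|) + \log \tfrac{1}{\delta}\right). \]
   Context: Hybrid simultaneous message passing (SMP) model for a relation $R \subseteq X\times Y\times Z$: Alice receives $x\in X$, Bob receives $y \in Y$. Alice sends a classical message to a referee and Bob sends a quantum message to the referee (simultaneously, with no interaction); the referee outputs some $z\in Z$. The protocol computes $R$ with error $\gamma$ if for every $(x,y)$ the output $z$ satisfies $(x,y,z)\in R$ with probability at least $1-\gamma$. The cost is the total number of bits plus qubits sent. $\mathsf{R}\mathsf{Q}_\gamma^{||}(R)$ is the minimum cost of such a protocol with error $\gamma$ in which the parties have only private randomness (no shared randomness or entanglement). $\mathsf{R}\mathsf{Q}_\gamma^{||,pub}(R)$ is the same quantity when Alice and the referee additionally share an unlimited amount of public randomness. *)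

theory Defs
  imports "HOL-Probability.Probability" "Jordan_Normal_Form.Schur_Decomposition"
          "HOL-Library.Extended_Nat"
begin

definition mtrace :: "complex mat \<Rightarrow> complex" where
  "mtrace A = (\<Sum>i<dim_row A. A $$ (i,i))"

definition psd :: "nat \<Rightarrow> complex mat \<Rightarrow> bool" where
  "psd d A \<longleftrightarrow> A \<in> carrier_mat d d \<and> mat_adjoint A = A \<and>
     (\<forall>v \<in> carrier_vec d. 0 \<le> Re (conjugate v \<bullet> (A *\<^sub>v v)))"

definition density :: "nat \<Rightarrow> complex mat \<Rightarrow> bool" where
  "density d \<rho> \<longleftrightarrow> psd d \<rho> \<and> mtrace \<rho> = 1"

definition povm_supp :: "nat \<Rightarrow> ('z \<Rightarrow> complex mat) \<Rightarrow> 'z set" where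
  "povm_supp d E = {z. E z \<noteq> 0\<^sub>m d d}"

definition povm :: "nat \<Rightarrow> ('z \<Rightarrow> complex mat) \<Rightarrow> bool" where
  "povm d E \<longleftrightarrow> (\<forall>z. psd d (E z)) \<and> finite (povm_supp d E) \<and>
     (\<forall>i<d. \<forall>j<d. (\<Sum>z\<in>povm_supp d E. E z $$ (i,j)) = (if i = j then 1 else 0))"

definition succ_prob :: "nat \<Rightarrow> ('z \<Rightarrow> complex mat) \<Rightarrow> complex mat \<Rightarrow> ('z \<Rightarrow> bool) \<Rightarrow> real" where
  "succ_prob d E \<rho> P = (\<Sum>z\<in>{z \<in> povm_supp d E. P z}. Re (mtrace (E z * \<rho>)))"

(* Alice: message distribution A x over {0..<2^a} (a classical bits),
   Bob: mixed state \<rho> y on q qubits (dimension 2^q),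
   Referee: for each classical message m a POVM E m with outcomes in Z. *)
definition hybrid_priv_protocol ::
  "nat set \<Rightarrow> nat set \<Rightarrow> (nat \<times> nat \<times> 'z) set \<Rightarrow> real \<Rightarrow> nat \<Rightarrow> nat \<Rightarrow>
   (nat \<Rightarrow> nat pmf) \<Rightarrow> (nat \<Rightarrow> complex mat) \<Rightarrow> (nat \<Rightarrow> 'z \<Rightarrow> complex mat) \<Rightarrow> bool" where
  "hybrid_priv_protocol X Y R \<gamma> a q A \<rho> E \<longleftrightarrow>
     (\<forall>x\<in>X. set_pmf (A x) \<subseteq> {..<2^a}) \<and>
     (\<forall>y\<in>Y. density (2^q) (\<rho> y)) \<and>
     (\<forall>m<2^a. povm (2^q) (E m)) \<and>
     (\<forall>x\<in>X. \<forall>y\<in>Y.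
        measure_pmf.expectation (A x) (\<lambda>m. succ_prob (2^q) (E m) (\<rho> y) (\<lambda>z. (x,y,z) \<in> R))
          \<ge> 1 - \<gamma>)"

definition hybrid_pub_protocol ::
  "nat set \<Rightarrow> nat set \<Rightarrow> (nat \<times> nat \<times> 'z) set \<Rightarrow> real \<Rightarrow> nat \<Rightarrow> nat \<Rightarrow> nat pmf \<Rightarrow>
   (nat \<Rightarrow> nat \<Rightarrow> nat pmf) \<Rightarrow> (nat \<Rightarrow> complex mat) \<Rightarrow> (nat \<Rightarrow> nat \<Rightarrow> 'z \<Rightarrow> complex mat) \<Rightarrow> bool" where
  "hybrid_pub_protocol X Y R \<gamma> a q \<mu> A \<rho> E \<longleftrightarrow>
     (\<forall>r. \<forall>x\<in>X. set_pmf (A r x) \<subseteq> {..<2^a}) \<and>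
     (\<forall>y\<in>Y. density (2^q) (\<rho> y)) \<and>
     (\<forall>r. \<forall>m<2^a. povm (2^q) (E r m)) \<and>
     (\<forall>x\<in>X. \<forall>y\<in>Y.
        measure_pmf.expectation \<mu> (\<lambda>r. measure_pmf.expectation (A r x)
           (\<lambda>m. succ_prob (2^q) (E r m) (\<rho> y) (\<lambda>z. (x,y,z) \<in> R)))
          \<ge> 1 - \<gamma>)"

(* RQ^{||}_gamma(R): minimal cost a + q (\<infinity> if no protocol exists) *)
definition RQ_priv :: "nat set \<Rightarrow> nat set \<Rightarrow> (nat \<times> nat \<times> 'z) set \<Rightarrow> real \<Rightarrow> enat" where
  "RQ_priv X Y R \<gamma> = Inf {enat (a + q) | a q.
      \<exists>A \<rho> E. hybrid_priv_protocol X Y R \<gamma> a q A \<rho> E}"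

definition RQ_pub :: "nat set \<Rightarrow> nat set \<Rightarrow> (nat \<times> nat \<times> 'z) set \<Rightarrow> real \<Rightarrow> enat" where
  "RQ_pub X Y R \<gamma> = Inf {enat (a + q) | a q.
      \<exists>\<mu> A \<rho> E. hybrid_pub_protocol X Y R \<gamma> a q \<mu> A \<rho> E}"

end

theory Submission imports Defs begin

definition qf :: "nat \<Rightarrow> (nat \<Rightarrow> nat \<Rightarrow> complex) \<Rightarrow> (nat \<Rightarrow> complex) \<Rightarrow> complex" where
  "qf d f v = (\<Sum>i<d. \<Sum>j<d. cnj (v i) * f i j * v j)"

definition psdf :: "nat \<Rightarrow> (nat \<Rightarrow> nat \<Rightarrow> complex) \<Rightarrow> bool" where
  "psdf d f \<longleftrightarrow> (\<forall>i<d. \<forall>j<d. f j i = cnj (f i j)) \<and> (\<forall>v. 0 \<le> Re (qf d f v))"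

lemma psd_psdf:
  assumes "psd d A" shows "psdf d (\<lambda>i j. A $$ (i,j))"
proof -
  have A: "A \<in> carrier_mat d d" and adj: "mat_adjoint A = A"
    and pos: "\<And>v. v \<in> carrier_vec d \<Longrightarrow> 0 \<le> Re (conjugate v \<bullet> (A *\<^sub>v v))"
    using assms unfolding psd_def by auto
  have h: "A $$ (j,i) = cnj (A $$ (i,j))" if "i<d" "j<d" for i j
  proof -
    have "A $$ (j,i) = mat_adjoint A $$ (j,i)" using adj by simp
    also have "\<dots> = cnj (A $$ (i,j))" using A that unfolding mat_adjoint_def
      by (simp add: mat_of_rows_def)
    finally show ?thesis .
  qed
  have q: "qf d (\<lambda>i j. A $$ (i,j)) v = conjugate (vec d v) \<bullet> (A *\<^sub>v vec d v)" for v
    using A by (simp add: qf_def scalar_prod_def mult_mat_vec_def sum_distrib_left mult.assoc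
        lessThan_atLeast0)
  have "0 \<le> Re (qf d (\<lambda>i j. A $$ (i,j)) v)" for v
    unfolding q by (rule pos) simp
  then show ?thesis unfolding psdf_def using h by blast
qed

lemma sum_one:
  assumes "k < (d::nat)" "\<forall>i<d. i \<noteq> k \<longrightarrow> h i = 0"
  shows "(\<Sum>i<d. h i) = (h k :: complex)"
proof -
  have "(\<Sum>i<d. h i) = (\<Sum>i\<in>{k}. h i)"
    by (rule sum.mono_neutral_right) (use assms in auto)
  then show ?thesis by simp
qed

lemma sum_two:
  assumes "k < (d::nat)" "j < d" "k \<noteq> j" "\<forall>i<d. i \<noteq> k \<and> i \<noteq> j \<longrightarrow> h i = 0"
  shows "(\<Sum>i<d. h i) = (h k + h j :: complex)"
proof -
  have "(\<Sum>i<d. h i) = (\<Sum>i\<in>{k,j}. h i)"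
    by (rule sum.mono_neutral_right) (use assms in auto)
  then show ?thesis using assms by simp
qed

lemma qf_one:
  assumes "k < d"
  shows "qf d f (\<lambda>i. if i = k then 1 else 0) = f k k"
proof -
  have "qf d f (\<lambda>i. if i = k then 1 else 0) = (\<Sum>j<d. cnj (if k = k then 1 else 0) * f k j * (if j = k then 1 else 0))"
    unfolding qf_def by (rule sum_one[OF assms]) auto
  also have "\<dots> = f k k" by (rule trans[OF sum_one[OF assms]]) auto
  finally show ?thesis .
qed

lemma qf_two:
  assumes "k < d" "j < d" "k \<noteq> j" "\<forall>i. i \<noteq> k \<and> i \<noteq> j \<longrightarrow> v i = 0"
  shows "qf d f v = cnj (v k) * f k k * v k + cnj (v k) * f k j * v j
                   + cnj (v j) * f j k * v k + cnj (v j) * f j j * v j"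
proof -
  have inner: "(\<Sum>l<d. cnj (v i) * f i l * v l) = cnj (v i) * f i k * v k + cnj (v i) * f i j * v j" for i
    by (rule sum_two) (use assms in auto)
  have "qf d f v = (\<Sum>i<d. cnj (v i) * f i k * v k + cnj (v i) * f i j * v j)"
    unfolding qf_def inner ..
  also have "\<dots> = (cnj (v k) * f k k * v k + cnj (v k) * f k j * v j)
                   + (cnj (v j) * f j k * v k + cnj (v j) * f j j * v j)"
    by (rule sum_two) (use assms in auto)
  finally show ?thesis by (simp add: add.assoc)
qed

lemma psdf_diag:
  assumes "psdf d f" "k < d"
  shows "0 \<le> Re (f k k)" "Im (f k k) = 0"
proof -
  show "0 \<le> Re (f k k)" using assms qf_one[OF assms(2), of f] unfolding psdf_def by metis
  have "f k k = cnj (f k k)" using assms unfolding psdf_def by blast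
  then show "Im (f k k) = 0" by (metis cnj.sel(2) neg_equal_zero)
qed

lemma cnj_mult_self: "cnj a * a = complex_of_real ((cmod a)^2)"
  by (metis complex_norm_square mult.commute of_real_power)

lemma psdf_zero_row:
  assumes "psdf d f" "k < d" "f k k = 0" "j < d"
  shows "f k j = 0"
proof (rule ccontr)
  assume a0: "f k j \<noteq> 0"
  then have jk: "j \<noteq> k" using assms by auto
  define a where "a = f k j"
  have fjk: "f j k = cnj a" using assms unfolding psdf_def a_def by blast
  have na: "(cmod a)^2 > 0" using a0 a_def by simp
  define t where "t = (Re (f j j) + 1) / (2 * (cmod a)^2)"
  define v where "v = (\<lambda>i. if i = k then - complex_of_real t * a else if i = j then 1 else 0)"
  have "qf d f v = cnj (v k) * f k k * v k + cnj (v k) * f k j * v j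
                   + cnj (v j) * f j k * v k + cnj (v j) * f j j * v j"
    by (rule qf_two) (use assms jk in \<open>auto simp: v_def\<close>)
  also have "\<dots> = - complex_of_real t * (cnj a * a) - complex_of_real t * (cnj a * a) + f j j"
    using jk assms by (simp add: v_def fjk a_def[symmetric] algebra_simps)
  finally have "Re (qf d f v) = - 2 * t * (cmod a)^2 + Re (f j j)"
    by (simp add: cnj_mult_self)
  also have "\<dots> = -1" using na by (simp add: t_def field_simps)
  finally show False using assms(1) unfolding psdf_def by (metis neg_0_le_iff_le not_one_le_zero)
qed

lemma qf_upd_zero:
  assumes "\<forall>j<d. g k j = 0" "\<forall>i<d. g i k = 0"
  shows "qf d g (v(k:=c)) = qf d g v"
  unfolding qf_def by (intro sum.cong refl) (use assms in auto)

lemma sum_upd: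
  assumes "k < (d::nat)"
  shows "(\<Sum>j<d. h j * (v(k:=c)) j) = (\<Sum>j<d. h j * v j) + h k * (c - v k :: complex)"
proof -
  have "(\<Sum>j<d. h j * (v(k:=c)) j) = (\<Sum>j<d. h j * v j + (if j = k then h k * (c - v k) else 0))"
    by (intro sum.cong refl) (auto simp: algebra_simps)
  also have "\<dots> = (\<Sum>j<d. h j * v j) + h k * (c - v k)"
    using assms by (simp add: sum.distrib algebra_simps)
  finally show ?thesis .
qed

lemma trace_nonneg_aux:
  assumes E: "psdf d E"
  shows "psdf d f \<Longrightarrow> (\<forall>i<d. \<forall>j<d. (i < k \<or> j < k) \<longrightarrow> f i j = 0)
          \<Longrightarrow> 0 \<le> Re (\<Sum>i<d. \<Sum>j<d. E i j * f j i)"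
proof (induction "d - k" arbitrary: k f)
  case 0
  then have "(\<Sum>i<d. \<Sum>j<d. E i j * f j i) = 0" by (intro sum.neutral ballI) auto
  then show ?case by simp
next
  case (Suc n)
  then have kd: "k < d" by simp
  have IH: "\<And>f'. psdf d f' \<Longrightarrow> (\<forall>i<d. \<forall>j<d. (i < Suc k \<or> j < Suc k) \<longrightarrow> f' i j = 0)
          \<Longrightarrow> 0 \<le> Re (\<Sum>i<d. \<Sum>j<d. E i j * f' j i)"
    using Suc.hyps(1)[of "Suc k"] Suc.hyps(2) by simp
  have herm: "\<And>i j. i < d \<Longrightarrow> j < d \<Longrightarrow> f j i = cnj (f i j)"
    using Suc.prems(1) unfolding psdf_def by blast
  show ?case
  proof (cases "f k k = 0")
    case True
    have r: "f k j = 0" if "j < d" for j using psdf_zero_row[OF Suc.prems(1) kd True that] .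
    have c: "f j k = 0" if "j < d" for j using herm[OF kd that] r[OF that] by simp
    show ?thesis
    proof (rule IH[OF Suc.prems(1)], intro allI impI)
      fix i j assume "i < d" "j < d" "i < Suc k \<or> j < Suc k"
      then show "f i j = 0" using Suc.prems(2) r c by (metis less_antisym)
    qed
  next
    case False
    define p where "p = f k k"
    have pre: "Re p \<ge> 0" "Im p = 0" using psdf_diag[OF Suc.prems(1) kd] p_def by auto
    have pc: "cnj p = p" using pre(2) by (simp add: complex_eq_iff)
    have pr: "p = complex_of_real (Re p)" using pre(2) by (simp add: complex_eq_iff)
    have pnz: "p \<noteq> 0" using False p_def by simp
    then have ppos: "Re p > 0" using pre pr by (metis less_eq_real_def of_real_0)
    define f' where "f' = (\<lambda>i j. f i j - f i k * f k j / p)"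
    have rowk: "f' k j = 0" for j using pnz by (simp add: f'_def p_def)
    have colk: "f' i k = 0" for i using pnz by (simp add: f'_def p_def)
    define \<beta> where "\<beta> = (\<lambda>v. \<Sum>j<d. f k j * v j)"
    have eq1: "qf d f' v = qf d f v - cnj (\<beta> v) * \<beta> v / p" for v
    proof -
      have s1: "(\<Sum>i<d. cnj (v i) * f i k) = cnj (\<beta> v)"
        unfolding \<beta>_def cnj_sum
      proof (intro sum.cong refl)
        fix i assume "i \<in> {..<d}"
        then have "f i k = cnj (f k i)" using herm[OF kd, of i] by simp
        then show "cnj (v i) * f i k = cnj (f k i * v i)" by simp
      qed
      have "qf d f' v = (\<Sum>i<d. \<Sum>j<d. cnj (v i) * f i j * v j - (cnj (v i) * f i k) * (f k j * v j) / p)"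
        unfolding qf_def f'_def by (intro sum.cong refl) (simp add: algebra_simps)
      also have "\<dots> = qf d f v - (\<Sum>i<d. cnj (v i) * f i k) * (\<Sum>j<d. f k j * v j) / p"
        unfolding qf_def sum_subtractf sum_product sum_divide_distrib by simp
      finally show ?thesis using s1 \<beta>_def by simp
    qed
    have f'herm: "f' j i = cnj (f' i j)" if "i < d" "j < d" for i j
    proof -
      have h1: "f j i = cnj (f i j)" "f j k = cnj (f k j)" "f k i = cnj (f i k)"
        using herm[OF that] herm[OF that(2) kd] herm[OF kd that(1)] by auto
      show ?thesis unfolding f'_def h1 by (simp add: pc mult.commute)
    qed
    have f'pos: "0 \<le> Re (qf d f' v)" for v
    proof -
      define w where "w = v(k := v k - \<beta> v / p)"
      have bw: "\<beta> w = 0"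
        unfolding w_def \<beta>_def using sum_upd[OF kd] pnz by (simp add: p_def)
      have "qf d f' v = qf d f' w" unfolding w_def
        by (rule qf_upd_zero[symmetric]) (simp_all add: rowk colk)
      also have "\<dots> = qf d f w" using eq1 bw by simp
      finally show ?thesis using Suc.prems(1) unfolding psdf_def by simp
    qed
    have psdf': "psdf d f'" unfolding psdf_def using f'herm f'pos by blast
    have zero': "\<forall>i<d. \<forall>j<d. (i < Suc k \<or> j < Suc k) \<longrightarrow> f' i j = 0"
    proof (intro allI impI)
      fix i j assume ij: "i < d" "j < d" "i < Suc k \<or> j < Suc k"
      show "f' i j = 0"
      proof (cases "i = k \<or> j = k")
        case True then show ?thesis using rowk colk by auto
      next
        case False
        then have "i < k \<or> j < k" using ij by auto
        then show ?thesis using Suc.prems(2) ij kd unfolding f'_def by auto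
      qed
    qed
    have nn1: "0 \<le> Re (\<Sum>i<d. \<Sum>j<d. E i j * f' j i)" by (rule IH[OF psdf' zero'])
    define c where "c = (\<lambda>i. f i k)"
    have split: "(\<Sum>i<d. \<Sum>j<d. E i j * f j i) = (\<Sum>i<d. \<Sum>j<d. E i j * f' j i) + qf d E c / p"
    proof -
      have "(\<Sum>i<d. \<Sum>j<d. E i j * f j i) = (\<Sum>i<d. \<Sum>j<d. E i j * f' j i + cnj (c i) * E i j * c j / p)"
        unfolding f'_def c_def
      proof (intro sum.cong refl)
        fix i j assume "i \<in> {..<d}" "j \<in> {..<d}"
        then have h: "f k i = cnj (f i k)" using herm[of i k] kd by simp
        show "E i j * f j i = E i j * (f j i - f j k * f k i / p) + cnj (f i k) * E i j * f j k / p"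
          unfolding h by (simp add: algebra_simps)
      qed
      also have "\<dots> = (\<Sum>i<d. \<Sum>j<d. E i j * f' j i) + qf d E c / p"
        unfolding qf_def sum.distrib sum_divide_distrib by simp
      finally show ?thesis .
    qed
    have "0 \<le> Re (qf d E c)" using E unfolding psdf_def by blast
    then have nn2: "0 \<le> Re (qf d E c / p)" using ppos
      by (subst pr) (simp add: Re_divide_of_real)
    show ?thesis unfolding split using nn1 nn2 by simp
  qed
qed

lemma trace_nonneg:
  assumes "psd d E" "psd d \<rho>"
  shows "0 \<le> Re (mtrace (E * \<rho>))"
proof -
  have Ec: "E \<in> carrier_mat d d" and rc: "\<rho> \<in> carrier_mat d d" using assms unfolding psd_def by auto
  have "mtrace (E * \<rho>) = (\<Sum>i<d. \<Sum>j<d. E $$ (i,j) * \<rho> $$ (j,i))"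
    unfolding mtrace_def using Ec rc
    by (simp add: scalar_prod_def lessThan_atLeast0)
  also have "0 \<le> Re \<dots>"
    by (rule trace_nonneg_aux[OF psd_psdf[OF assms(1)] psd_psdf[OF assms(2)], of 0]) simp
  finally show ?thesis .
qed

lemma mtrace_prod:
  assumes "E \<in> carrier_mat d d" "\<rho> \<in> carrier_mat d d"
  shows "mtrace (E * \<rho>) = (\<Sum>i<d. \<Sum>j<d. E $$ (i,j) * \<rho> $$ (j,i))"
  unfolding mtrace_def using assms by (simp add: scalar_prod_def lessThan_atLeast0)

lemma succ_prob_bounds:
  assumes "povm d E" "density d \<rho>"
  shows "0 \<le> succ_prob d E \<rho> P" "succ_prob d E \<rho> P \<le> 1"
proof -
  define S where "S = povm_supp d E"
  have fin: "finite S" and psdE: "\<And>z. psd d (E z)"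
    and sumI: "\<And>i j. i < d \<Longrightarrow> j < d \<Longrightarrow> (\<Sum>z\<in>S. E z $$ (i,j)) = (if i = j then 1 else 0)"
    using assms(1) unfolding povm_def S_def by auto
  have psdr: "psd d \<rho>" and tr: "mtrace \<rho> = 1" using assms(2) unfolding density_def by auto
  have rc: "\<rho> \<in> carrier_mat d d" using psdr unfolding psd_def by auto
  have nn: "0 \<le> Re (mtrace (E z * \<rho>))" for z by (rule trace_nonneg[OF psdE psdr])
  show "0 \<le> succ_prob d E \<rho> P" unfolding succ_prob_def by (intro sum_nonneg nn)
  have "succ_prob d E \<rho> P \<le> (\<Sum>z\<in>S. Re (mtrace (E z * \<rho>)))"
    unfolding succ_prob_def S_def[symmetric] by (rule sum_mono2) (use fin nn in auto)
  also have "\<dots> = Re (\<Sum>z\<in>S. mtrace (E z * \<rho>))" by simp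
  also have "(\<Sum>z\<in>S. mtrace (E z * \<rho>)) = (\<Sum>z\<in>S. \<Sum>i<d. \<Sum>j<d. E z $$ (i,j) * \<rho> $$ (j,i))"
    using psdE rc by (intro sum.cong refl mtrace_prod) (auto simp: psd_def)
  also have "\<dots> = (\<Sum>i<d. \<Sum>j<d. (\<Sum>z\<in>S. E z $$ (i,j)) * \<rho> $$ (j,i))"
    by (simp add: sum_distrib_right sum.swap[of _ S])
  also have "\<dots> = (\<Sum>i<d. \<Sum>j<d. (if i = j then 1 else 0) * \<rho> $$ (j,i))"
    by (intro sum.cong refl) (simp add: sumI)
  also have "\<dots> = (\<Sum>i<d. \<rho> $$ (i,i))"
  proof (intro sum.cong refl)
    fix i assume "i \<in> {..<d}"
    then show "(\<Sum>j<d. (if i = j then 1 else 0) * \<rho> $$ (j,i)) = \<rho> $$ (i,i)"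
      by (subst sum_one[of i]) auto
  qed
  also have "\<dots> = mtrace \<rho>" unfolding mtrace_def using rc by simp
  finally show "succ_prob d E \<rho> P \<le> 1" using tr by simp
qed

lemma sampling:
  fixes \<mu> :: "nat pmf" and F :: "'s \<Rightarrow> nat \<Rightarrow> real" and S :: "'s set" and T :: nat
  assumes fin: "finite S" and T: "T > 0" and \<delta>: "\<delta> > 0"
    and bnd: "\<And>s r. s \<in> S \<Longrightarrow> 0 \<le> F s r \<and> F s r \<le> 1"
    and ex: "\<And>s. s \<in> S \<Longrightarrow> measure_pmf.expectation \<mu> (F s) \<ge> 1 - \<epsilon>"
    and small: "real (card S) * exp (-2 * real T * \<delta>^2) < 1"
  shows "\<exists>rs. \<forall>s\<in>S. (\<Sum>i<T. F s (rs i)) / real T \<ge> 1 - \<epsilon> - \<delta>"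
proof -
  define P where "P = Pi_pmf {..<T} (0::nat) (\<lambda>_. \<mu>)"
  define bad where "bad s = {\<omega>. (\<Sum>i<T. F s (\<omega> i)) < real T * (1 - \<epsilon> - \<delta>)}" for s
  have pb: "measure_pmf.prob P (bad s) \<le> exp (-2 * real T * \<delta>^2)" if s: "s \<in> S" for s
  proof -
    have comp: "measure_pmf.expectation P (\<lambda>\<omega>. F s (\<omega> i)) = measure_pmf.expectation \<mu> (F s)"
      if "i < T" for i
    proof -
      have "measure_pmf.expectation P (\<lambda>\<omega>. F s (\<omega> i))
          = measure_pmf.expectation (map_pmf (\<lambda>\<omega>. \<omega> i) P) (F s)" by simp
      also have "map_pmf (\<lambda>\<omega>. \<omega> i) P = \<mu>" unfolding P_def using that
        by (subst Pi_pmf_component) auto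
      finally show ?thesis .
    qed
    define m where "m = (\<Sum>i<T. measure_pmf.expectation P (\<lambda>\<omega>. F s (\<omega> i)))"
    interpret H: Hoeffding_ineq "measure_pmf P" "{..<T}" "\<lambda>i \<omega>. F s (\<omega> i)" "\<lambda>_. 0" "\<lambda>_. 1" m
    proof unfold_locales
      show "prob_space.indep_vars (measure_pmf P) (\<lambda>_. borel) (\<lambda>i \<omega>. F s (\<omega> i)) {..<T}"
        unfolding P_def
        by (intro prob_space.indep_vars_compose2[OF _ indep_vars_Pi_pmf])
           (auto simp: measure_pmf.prob_space_axioms)
    qed (use bnd[OF s] in \<open>auto simp: m_def\<close>)
    have mge: "m \<ge> real T * (1 - \<epsilon>)"
    proof -
      have "m = real T * measure_pmf.expectation \<mu> (F s)" unfolding m_def using comp by simp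
      then show ?thesis using ex[OF s] T by (simp add: mult_left_mono)
    qed
    have "bad s \<subseteq> {\<omega> \<in> space (measure_pmf P). (\<Sum>i<T. F s (\<omega> i)) \<le> m - real T * \<delta>}"
      using mge by (auto simp: bad_def algebra_simps)
    then have "measure_pmf.prob P (bad s) \<le> measure_pmf.prob P {\<omega> \<in> space (measure_pmf P). (\<Sum>i<T. F s (\<omega> i)) \<le> m - real T * \<delta>}"
      by (intro measure_pmf.finite_measure_mono) auto
    also have "\<dots> \<le> exp (-2 * (real T * \<delta>)^2 / (\<Sum>i<T. (1 - 0)^2))"
      by (rule H.Hoeffding_ineq_le) (use \<delta> T in auto)
    also have "-2 * (real T * \<delta>)^2 / (\<Sum>i<T. (1 - 0)^2) = -2 * real T * \<delta>^2"
      using T by (simp add: power2_eq_square)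
    finally show ?thesis .
  qed
  have "measure_pmf.prob P (\<Union>s\<in>S. bad s) \<le> (\<Sum>s\<in>S. measure_pmf.prob P (bad s))"
    by (rule measure_pmf.finite_measure_subadditive_finite) (use fin in auto)
  also have "\<dots> \<le> (\<Sum>s\<in>S. exp (-2 * real T * \<delta>^2))" by (rule sum_mono) (rule pb)
  also have "\<dots> < 1" using small by simp
  finally have "(\<Union>s\<in>S. bad s) \<noteq> UNIV" by auto
  then obtain \<omega> where "\<omega> \<notin> (\<Union>s\<in>S. bad s)" by auto
  then have "\<forall>s\<in>S. (\<Sum>i<T. F s (\<omega> i)) / real T \<ge> 1 - \<epsilon> - \<delta>"
    using T by (auto simp: bad_def field_simps)
  then show ?thesis by blast
qed


lemma exp_fin:
  fixes g :: "nat \<Rightarrow> real"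
  assumes "set_pmf p \<subseteq> A" "finite A"
  shows "measure_pmf.expectation p g = (\<Sum>a\<in>A. pmf p a * g a)"
  using assms by (subst integral_measure_pmf[of A]) auto

lemma exp_unit:
  fixes g :: "nat \<Rightarrow> real"
  assumes "set_pmf p \<subseteq> A" "finite A" "\<And>m. m \<in> A \<Longrightarrow> 0 \<le> g m \<and> g m \<le> 1"
  shows "0 \<le> measure_pmf.expectation p g \<and> measure_pmf.expectation p g \<le> 1"
proof -
  have "0 \<le> (\<Sum>a\<in>A. pmf p a * g a)" using assms(3) by (intro sum_nonneg) auto
  moreover have "(\<Sum>a\<in>A. pmf p a * g a) \<le> (\<Sum>a\<in>A. pmf p a)"
    using assms(3) by (intro sum_mono) (simp add: mult_left_le)
  moreover have "(\<Sum>a\<in>A. pmf p a) = 1" using assms by (intro sum_pmf_eq_1)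
  ultimately show ?thesis using exp_fin[OF assms(1,2)] by simp
qed

lemma exp_cong_fin:
  fixes g g' :: "nat \<Rightarrow> real"
  assumes "set_pmf p \<subseteq> A" "finite A" "\<And>m. m \<in> set_pmf p \<Longrightarrow> g m = g' m"
  shows "measure_pmf.expectation p g = measure_pmf.expectation p g'"
proof -
  have "(\<Sum>a\<in>A. pmf p a * g a) = (\<Sum>a\<in>A. pmf p a * g' a)"
    using assms(3) by (intro sum.cong refl) (metis mult_eq_0_iff set_pmf_iff)
  then show ?thesis using exp_fin[OF assms(1,2)] by simp
qed

lemma exp_bind_unif:
  fixes g :: "nat \<Rightarrow> real"
  assumes T: "T > 0" and U: "finite U" and sub: "\<And>i. i < T \<Longrightarrow> set_pmf (f i) \<subseteq> U"
  shows "measure_pmf.expectation (bind_pmf (pmf_of_set {..<T}) f) g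
           = (\<Sum>i<T. measure_pmf.expectation (f i) g) / real T"
proof -
  have ne: "{..<T} \<noteq> {}" using T by auto
  have sb: "set_pmf (bind_pmf (pmf_of_set {..<T}) f) \<subseteq> U"
    using sub ne by (auto simp: set_bind_pmf)
  have pm: "pmf (bind_pmf (pmf_of_set {..<T}) f) x = (\<Sum>i<T. pmf (f i) x) / real T" for x
    using ne by (simp add: pmf_bind integral_pmf_of_set)
  have "measure_pmf.expectation (bind_pmf (pmf_of_set {..<T}) f) g
        = (\<Sum>x\<in>U. (\<Sum>i<T. pmf (f i) x) / real T * g x)"
    using exp_fin[OF sb U] pm by simp
  also have "\<dots> = (\<Sum>i<T. \<Sum>x\<in>U. pmf (f i) x * g x) / real T"
    by (simp add: sum_divide_distrib sum_distrib_right sum.swap[of _ U])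
  also have "\<dots> = (\<Sum>i<T. measure_pmf.expectation (f i) g) / real T"
    using exp_fin[OF sub U] by simp
  finally show ?thesis .
qed

lemma log2_nonneg_nat: "0 \<le> log 2 (real n)"
  by (cases "n = 0") (auto simp: log_def)

lemma ln_le_log2: assumes "x \<ge> 1" shows "ln x \<le> log 2 x"
proof -
  have "ln x \<ge> 0" using assms by simp
  moreover have "ln 2 \<le> (1::real)" using ln_2_less_1 by simp
  moreover have "ln (2::real) > 0" by simp
  ultimately have "ln x \<le> ln x / ln 2" by (simp add: le_divide_eq mult_left_le)
  then show ?thesis by (simp add: log_def)
qed

theorem lemma3p1:
  "\<exists>C::real. \<forall>(X::nat set) (Y::nat set) (R::(nat \<times> nat \<times> 'z) set) (\<epsilon>::real) (\<delta>::real).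
     finite X \<longrightarrow> finite Y \<longrightarrow> R \<subseteq> X \<times> Y \<times> UNIV \<longrightarrow> \<epsilon> > 0 \<longrightarrow> \<delta> > 0 \<longrightarrow>
     RQ_priv X Y R (\<epsilon> + \<delta>) \<le> RQ_pub X Y R \<epsilon> +
       enat (nat \<lceil>C * (log 2 (2 + log 2 (real (card X)) + log 2 (real (card Y)))
                       + max 0 (log 2 (1 / \<delta>)))\<rceil>)"
proof (intro exI[of _ 2] allI impI)
  fix X Y :: "nat set" and R :: "(nat \<times> nat \<times> 'z) set" and \<epsilon> \<delta> :: real
  assume finX: "finite X" and finY: "finite Y" and RXY: "R \<subseteq> X \<times> Y \<times> UNIV"
    and \<epsilon>: "\<epsilon> > 0" and \<delta>: "\<delta> > 0"
  define L where "L = 2 + log 2 (real (card X)) + log 2 (real (card Y))"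
  define D where "D = max 0 (log 2 (1 / \<delta>))"
  define K where "K = nat \<lceil>2 * (log 2 L + D)\<rceil>"
  have L2: "L \<ge> 2" unfolding L_def using log2_nonneg_nat[of "card X"] log2_nonneg_nat[of "card Y"] by simp
  have logL: "log 2 L \<ge> 1" using L2 by simp
  have D0: "D \<ge> 0" unfolding D_def by simp
  have "RQ_priv X Y R (\<epsilon> + \<delta>) \<le> RQ_pub X Y R \<epsilon> + enat K"
  proof (cases "RQ_pub X Y R \<epsilon> = \<infinity>")
    case True then show ?thesis by simp
  next
    case False
    define Sp where "Sp = {enat (a + q) | a q. \<exists>\<mu> A \<rho> E. hybrid_pub_protocol X Y R \<epsilon> a q \<mu> A \<rho> E}"
    have "RQ_pub X Y R \<epsilon> = Inf Sp" unfolding RQ_pub_def Sp_def ..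
    then have "Sp \<noteq> {}" "RQ_pub X Y R \<epsilon> = (LEAST x. x \<in> Sp)"
      using False by (auto simp: Inf_enat_def split: if_splits)
    then have "RQ_pub X Y R \<epsilon> \<in> Sp" by (metis LeastI_ex ex_in_conv)
    then obtain a q \<mu> A \<rho> E where prot: "hybrid_pub_protocol X Y R \<epsilon> a q \<mu> A \<rho> E"
      and rq: "RQ_pub X Y R \<epsilon> = enat (a + q)" unfolding Sp_def by blast
    have Asup: "\<And>r x. x \<in> X \<Longrightarrow> set_pmf (A r x) \<subseteq> {..<2^a}"
      and dens: "\<And>y. y \<in> Y \<Longrightarrow> density (2^q) (\<rho> y)"
      and pov: "\<And>r m. m < 2^a \<Longrightarrow> povm (2^q) (E r m)"
      and succ: "\<And>x y. x \<in> X \<Longrightarrow> y \<in> Y \<Longrightarrow> measure_pmf.expectation \<mu> (\<lambda>r. measure_pmf.expectation (A r x)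
           (\<lambda>m. succ_prob (2^q) (E r m) (\<rho> y) (\<lambda>z. (x,y,z) \<in> R))) \<ge> 1 - \<epsilon>"
      using prot unfolding hybrid_pub_protocol_def by auto
    define k where "k = nat \<lceil>log 2 L + 2 * D\<rceil>"
    define T :: nat where "T = 2^k"
    have T0: "T > 0" unfolding T_def by simp
    have kK: "k \<le> K" unfolding k_def K_def using logL D0
      by (intro nat_mono ceiling_mono) simp
    have TL: "real T * \<delta>^2 \<ge> L"
    proof -
      have "2 powr D \<ge> 1 / \<delta>"
      proof -
        have "1 / \<delta> = 2 powr (log 2 (1 / \<delta>))" using \<delta> by simp
        also have "\<dots> \<le> 2 powr D" unfolding D_def by simp
        finally show ?thesis .
      qed
      then have dd: "(2 powr D * \<delta>)^2 \<ge> 1" using \<delta>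
        by (metis divide_le_eq le_numeral_extra(1) one_le_power power_mono zero_le_one)
      have "real T = 2 powr (real k)" unfolding T_def by (simp add: powr_realpow)
      also have "\<dots> \<ge> 2 powr (log 2 L + 2 * D)" unfolding k_def
        by (intro powr_mono) (use logL D0 in auto)
      finally have "real T \<ge> 2 powr (log 2 L + 2 * D)" .
      also have "2 powr (log 2 L + 2 * D) = 2 powr (log 2 L) * (2 powr D * 2 powr D)"
        by (simp only: powr_add[symmetric] mult_2)
      also have "\<dots> = L * (2 powr D)^2"
        using L2 by (simp add: power2_eq_square)
      finally have "real T * \<delta>^2 \<ge> L * (2 powr D * \<delta>)^2"
        using \<delta> by (simp add: power_mult_distrib mult_right_mono)
      moreover have "L * (2 powr D * \<delta>)^2 \<ge> L" using dd L2 by (simp add: mult_le_cancel_left1)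
      ultimately show ?thesis by linarith
    qed
    have small: "real (card (X \<times> Y)) * exp (-2 * real T * \<delta>^2) < 1"
    proof (cases "card X = 0 \<or> card Y = 0")
      case True then show ?thesis by (auto simp: card_cartesian_product)
    next
      case False
      then have cx: "real (card X) \<ge> 1" and cy: "real (card Y) \<ge> 1" by auto
      have N: "real (card (X \<times> Y)) = exp (ln (real (card X)) + ln (real (card Y)))"
        using cx cy by (simp add: card_cartesian_product exp_add)
      have "ln (real (card X)) + ln (real (card Y)) \<le> L - 2"
        unfolding L_def using ln_le_log2[OF cx] ln_le_log2[OF cy] by simp
      then have "ln (real (card X)) + ln (real (card Y)) + (-2 * real T * \<delta>^2) < 0"
        using TL L2 by linarith
      then show ?thesis unfolding N by (simp flip: exp_add)
    qed
    define F where "F = (\<lambda>(x,y) r. measure_pmf.expectation (A r x)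
           (\<lambda>m. succ_prob (2^q) (E r m) (\<rho> y) (\<lambda>z. (x,y,z) \<in> R)))"
    have Fb: "0 \<le> F s r \<and> F s r \<le> 1" if sXY: "s \<in> X \<times> Y" for s r
    proof -
      obtain x y where s: "s = (x,y)" "x \<in> X" "y \<in> Y" using sXY by blast
      have "0 \<le> succ_prob (2^q) (E r m) (\<rho> y) (\<lambda>z. (x,y,z) \<in> R) \<and> succ_prob (2^q) (E r m) (\<rho> y) (\<lambda>z. (x,y,z) \<in> R) \<le> 1"
        if "m \<in> {..<2^a}" for m
        using succ_prob_bounds[OF pov dens[OF s(3)]] that by simp
      then show ?thesis unfolding s F_def prod.case
        by (intro exp_unit[OF Asup[OF s(2)]]) auto
    qed
    have Fe: "measure_pmf.expectation \<mu> (F s) \<ge> 1 - \<epsilon>" if sXY: "s \<in> X \<times> Y" for s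
    proof -
      obtain x y where s: "s = (x,y)" "x \<in> X" "y \<in> Y" using sXY by blast
      show ?thesis unfolding s F_def prod.case by (rule succ[OF s(2,3)])
    qed
    have "\<exists>rs. \<forall>s\<in>X \<times> Y. (\<Sum>i<T. F s (rs i)) / real T \<ge> 1 - \<epsilon> - \<delta>"
    proof (rule sampling[where S="X \<times> Y" and F=F and \<mu>=\<mu> and T=T and \<epsilon>=\<epsilon> and \<delta>=\<delta>])
      show "finite (X \<times> Y)" using finX finY by simp
    qed (use T0 \<delta> Fb Fe small in auto)
    then obtain rs where rs: "\<forall>s\<in>X \<times> Y. (\<Sum>i<T. F s (rs i)) / real T \<ge> 1 - \<epsilon> - \<delta>"
      by blast
    define h where "h = (\<lambda>i m. i * 2^a + m :: nat)"
    define A' where "A' = (\<lambda>x. bind_pmf (pmf_of_set {..<T}) (\<lambda>i. map_pmf (h i) (A (rs i) x)))"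
    define E' where "E' = (\<lambda>M. E (rs (M div 2^a)) (M mod 2^a))"
    have hb: "h i m < 2^(a+k)" if "i < T" "m < 2^a" for i m
    proof -
      have "h i m < (i + 1) * 2^a" unfolding h_def using that by simp
      also have "\<dots> \<le> T * 2^a" using that by (intro mult_right_mono) auto
      also have "\<dots> = 2^(a+k)" unfolding T_def by (simp add: power_add)
      finally show ?thesis .
    qed
    have hdm: "h i m div 2^a = i" "h i m mod 2^a = m" if "m < 2^a" for i m
      unfolding h_def using that by auto
    have mapsup: "set_pmf (map_pmf (h i) (A (rs i) x)) \<subseteq> {..<2^(a+k)}" if "x \<in> X" "i < T" for x i
      using Asup[OF that(1)] hb[OF that(2)] by auto
    have priv: "hybrid_priv_protocol X Y R (\<epsilon> + \<delta>) (a + k) q A' \<rho> E'"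
      unfolding hybrid_priv_protocol_def
    proof (intro conjI ballI allI impI)
      fix x assume x: "x \<in> X"
      show "set_pmf (A' x) \<subseteq> {..<2^(a+k)}"
      proof -
        have su: "set_pmf (pmf_of_set {..<T}) = {..<T}" using T0 by (intro set_pmf_of_set) auto
        show ?thesis unfolding A'_def set_bind_pmf su using mapsup[OF x] by blast
      qed
    next
      fix y assume "y \<in> Y" then show "density (2^q) (\<rho> y)" by (rule dens)
    next
      fix M :: nat assume "M < 2^(a+k)"
      show "povm (2^q) (E' M)" unfolding E'_def by (rule pov) simp
    next
      fix x y assume x: "x \<in> X" and y: "y \<in> Y"
      define g where "g = (\<lambda>M. succ_prob (2^q) (E' M) (\<rho> y) (\<lambda>z. (x,y,z) \<in> R))"
      have "measure_pmf.expectation (A' x) g = (\<Sum>i<T. measure_pmf.expectation (map_pmf (h i) (A (rs i) x)) g) / real T"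
        unfolding A'_def by (rule exp_bind_unif[OF T0 _ mapsup[OF x]]) auto
      also have "\<dots> = (\<Sum>i<T. F (x,y) (rs i)) / real T"
      proof -
        have "measure_pmf.expectation (map_pmf (h i) (A (rs i) x)) g = F (x,y) (rs i)" for i
        proof -
          have "measure_pmf.expectation (map_pmf (h i) (A (rs i) x)) g
              = measure_pmf.expectation (A (rs i) x) (\<lambda>m. g (h i m))" by simp
          also have "\<dots> = F (x,y) (rs i)" unfolding F_def prod.case
          proof (rule exp_cong_fin[OF Asup[OF x]])
            fix m assume "m \<in> set_pmf (A (rs i) x)"
            then have "m < 2^a" using Asup[OF x] by blast
            then show "g (h i m) = succ_prob (2^q) (E (rs i) m) (\<rho> y) (\<lambda>z. (x,y,z) \<in> R)"
              unfolding g_def E'_def by (simp add: hdm)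
          qed simp
          finally show ?thesis .
        qed
        then show ?thesis by simp
      qed
      also have "\<dots> \<ge> 1 - (\<epsilon> + \<delta>)"
      proof -
        have "(x,y) \<in> X \<times> Y" using x y by blast
        then have "(\<Sum>i<T. F (x,y) (rs i)) / real T \<ge> 1 - \<epsilon> - \<delta>" using rs by blast
        then show ?thesis by linarith
      qed
      finally show "measure_pmf.expectation (A' x) (\<lambda>m. succ_prob (2^q) (E' m) (\<rho> y) (\<lambda>z. (x,y,z) \<in> R)) \<ge> 1 - (\<epsilon> + \<delta>)"
        unfolding g_def .
    qed
    have "RQ_priv X Y R (\<epsilon> + \<delta>) \<le> enat (a + k + q)"
      unfolding RQ_priv_def using priv by (intro Inf_lower) blast
    also have "\<dots> \<le> enat (a + q) + enat K" using kK by simp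
    finally show ?thesis using rq by simp
  qed
  then show "RQ_priv X Y R (\<epsilon> + \<delta>) \<le> RQ_pub X Y R \<epsilon> +
       enat (nat \<lceil>2 * (log 2 (2 + log 2 (real (card X)) + log 2 (real (card Y)))
                       + max 0 (log 2 (1 / \<delta>)))\<rceil>)"
    unfolding K_def L_def D_def .
qed

end
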